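(* Let $m>n$ be positive integers and let $G[V_1,V_2]$ be a balanced bipartite graph on $2(m+n-1)$ vertices (so $|V_1|=|V_2|=m+n-1$) with minimum degree $\delta(G)>\frac{3}{4}(m+n-1)$. Suppose a red-blue coloring of the edges of $G$ has no blue connected $n$-matching. Suppose further that $\mathcal{B}$ is a largest blue component of $G$ (one with the maximum number of vertices among all blue components) and that $|V(\mathcal{B})\cap V_i|\ge n$ for each $i\in\{1,2\}$. Let $S$ be a minimum vertex cover of $\mathcal{B}$. Then there is a red component of $G$ containing $V(\mathcal{B})\setminus S$.
   Context: For a red-blue edge coloring of $G$, the red subgraph (resp. blue subgraph) is the spanning subgraph of $G$ consisting of all red (resp. blue) edges; a red (blue) component is a connected component of it. A connected $k$-matching in a graph $H$ is a matching with $k$ edges all lying in a single connected component of $H$; a blue connected $k$-matching is a connected $k$-matching in the blue subgraph. A vertex cover of a graph is a set of vertices containing at least one endpoint of every edge; a minimum vertex cover is one of smallest size. *)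

theory Defs
  imports Complex_Main
begin

text \<open>Graphs: vertex set V, edge set F of 2-element subsets of V.
  A spanning subgraph is given by the same V and a subset of the edges.\<close>

definition walk_rel :: "'a set \<Rightarrow> 'a set set \<Rightarrow> 'a \<Rightarrow> 'a \<Rightarrow> bool" where
  "walk_rel V F = (\<lambda>x y. {x, y} \<in> F \<and> x \<in> V \<and> y \<in> V)"

definition is_component :: "'a set \<Rightarrow> 'a set set \<Rightarrow> 'a set \<Rightarrow> bool" where
  "is_component V F C \<longleftrightarrow> (\<exists>u\<in>V. C = {v \<in> V. (walk_rel V F)\<^sup>*\<^sup>* u v})"

definition is_matching :: "'a set set \<Rightarrow> bool" where
  "is_matching M \<longleftrightarrow> (\<forall>e\<in>M. \<forall>e'\<in>M. e \<noteq> e' \<longrightarrow> e \<inter> e' = {})"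

definition has_connected_matching :: "'a set \<Rightarrow> 'a set set \<Rightarrow> nat \<Rightarrow> bool" where
  "has_connected_matching V F k \<longleftrightarrow>
     (\<exists>M C. M \<subseteq> F \<and> is_matching M \<and> card M = k \<and> is_component V F C \<and> \<Union>M \<subseteq> C)"

text \<open>Vertex cover of the component with vertex set C of (V, F): the component's
  edges are exactly the edges of F inside C.\<close>
definition is_vertex_cover_comp :: "'a set set \<Rightarrow> 'a set \<Rightarrow> 'a set \<Rightarrow> bool" where
  "is_vertex_cover_comp F C S \<longleftrightarrow> S \<subseteq> C \<and> (\<forall>e\<in>F. e \<subseteq> C \<longrightarrow> e \<inter> S \<noteq> {})"

definition is_min_vertex_cover_comp :: "'a set set \<Rightarrow> 'a set \<Rightarrow> 'a set \<Rightarrow> bool" where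
  "is_min_vertex_cover_comp F C S \<longleftrightarrow> is_vertex_cover_comp F C S \<and>
     (\<forall>T. is_vertex_cover_comp F C T \<longrightarrow> card S \<le> card T)"

definition degree :: "'a set set \<Rightarrow> 'a \<Rightarrow> nat" where
  "degree E v = card {u. {u, v} \<in> E}"

end

theory Submission
  imports Defs
begin


lemma hall:
  fixes I :: "'i set" and S :: "'i \<Rightarrow> 'b set"
  assumes "finite I" "\<forall>i\<in>I. finite (S i)"
    "\<forall>J\<subseteq>I. card J \<le> card (\<Union>(S ` J))"
  shows "\<exists>f. inj_on f I \<and> (\<forall>i\<in>I. f i \<in> S i)"
  using assms
proof (induction "card I" arbitrary: I S rule: less_induct)
  case less
  show ?case
  proof (cases "I = {}")
    case True then show ?thesis by auto
  next
    case ne: False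
    show ?thesis
    proof (cases "\<exists>J. J \<subset> I \<and> J \<noteq> {} \<and> card (\<Union>(S ` J)) = card J")
      case True
      then obtain J where J: "J \<subset> I" "J \<noteq> {}" "card (\<Union>(S ` J)) = card J" by blast
      have fJ: "finite J" using J(1) less.prems(1) finite_subset by blast
      have "card J < card I" using J(1) less.prems(1) psubset_card_mono by blast
      moreover have "\<forall>K\<subseteq>J. card K \<le> card (\<Union>(S ` K))" using J(1) less.prems(3) by auto
      ultimately obtain f1 where f1: "inj_on f1 J" "\<forall>i\<in>J. f1 i \<in> S i"
        using less.hyps[of J S] fJ less.prems(2) J(1) by blast
      define U where "U = \<Union>(S ` J)"
      have fU: "finite U" unfolding U_def using fJ less.prems(2) J(1) by blast
      define S2 where "S2 = (\<lambda>i. S i - U)"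
      have "card (I - J) < card I"
      proof -
        have "card J > 0" using fJ J(2) by auto
        moreover have "card (I - J) = card I - card J" using J(1) fJ by (simp add: card_Diff_subset)
        moreover have "card J \<le> card I" using J(1) less.prems(1) card_mono by blast
        ultimately show ?thesis by linarith
      qed
      moreover have "\<forall>K\<subseteq>I - J. card K \<le> card (\<Union>(S2 ` K))"
      proof (intro allI impI)
        fix K assume K: "K \<subseteq> I - J"
        have fK: "finite K" using K less.prems(1) finite_subset by blast
        have eq: "\<Union>(S2 ` K) = \<Union>(S ` (K \<union> J)) - U" unfolding S2_def U_def by auto
        have fKJ: "finite (\<Union>(S ` (K \<union> J)))" using K J(1) fK fJ less.prems(2) by auto
        have sub: "U \<subseteq> \<Union>(S ` (K \<union> J))" unfolding U_def by auto
        have c1: "card (\<Union>(S2 ` K)) = card (\<Union>(S ` (K \<union> J))) - card U"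
          unfolding eq using card_Diff_subset[OF finite_subset[OF sub fKJ] sub] .
        have "K \<union> J \<subseteq> I" using K J(1) by blast
        then have "card (K \<union> J) \<le> card (\<Union>(S ` (K \<union> J)))" using less.prems(3) by blast
        moreover have "card (K \<union> J) = card K + card J" using K fK fJ by (subst card_Un_disjoint) auto
        ultimately show "card K \<le> card (\<Union>(S2 ` K))" using c1 J(3) U_def by simp
      qed
      moreover have "\<forall>i\<in>I - J. finite (S2 i)" using less.prems(2) unfolding S2_def by auto
      ultimately obtain f2 where f2: "inj_on f2 (I - J)" "\<forall>i\<in>I - J. f2 i \<in> S2 i"
        using less.hyps[of "I - J" S2] less.prems(1) by blast
      define f where "f = (\<lambda>i. if i \<in> J then f1 i else f2 i)"
      have "inj_on f I"
      proof (rule inj_onI)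
        fix i j assume ij: "i \<in> I" "j \<in> I" "f i = f j"
        show "i = j"
        proof (cases "i \<in> J"; cases "j \<in> J")
          assume "i \<in> J" "j \<in> J" then show ?thesis using ij f1(1) unfolding f_def by (auto dest: inj_onD)
        next
          assume "i \<notin> J" "j \<notin> J" then show ?thesis using ij f2(1) unfolding f_def by (auto dest: inj_onD)
        next
          assume a: "i \<in> J" "j \<notin> J"
          then have "f i \<in> U" using f1(2) unfolding f_def U_def by auto
          moreover have "f j \<notin> U" using a f2(2) ij(2) unfolding f_def S2_def by auto
          ultimately show ?thesis using ij by simp
        next
          assume a: "i \<notin> J" "j \<in> J"
          then have "f j \<in> U" using f1(2) unfolding f_def U_def by auto
          moreover have "f i \<notin> U" using a f2(2) ij(1) unfolding f_def S2_def by auto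
          ultimately show ?thesis using ij by simp
        qed
      qed
      moreover have "\<forall>i\<in>I. f i \<in> S i" using f1(2) f2(2) unfolding f_def S2_def by auto
      ultimately show ?thesis by blast
    next
      case False
      then have strict: "\<And>J. J \<subset> I \<Longrightarrow> J \<noteq> {} \<Longrightarrow> card J < card (\<Union>(S ` J))"
        using less.prems(3) by (metis le_neq_implies_less psubset_imp_subset)
      obtain i0 where i0: "i0 \<in> I" using ne by blast
      have "card {i0} \<le> card (\<Union>(S ` {i0}))" using less.prems(3) i0 by blast
      then have "S i0 \<noteq> {}" by auto
      then obtain x where x: "x \<in> S i0" by blast
      define S1 where "S1 = (\<lambda>i. S i - {x})"
      have "card (I - {i0}) < card I" using i0 less.prems(1) by (meson card_Diff1_less)
      moreover have "\<forall>K\<subseteq>I - {i0}. card K \<le> card (\<Union>(S1 ` K))"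
      proof (intro allI impI)
        fix K assume K: "K \<subseteq> I - {i0}"
        show "card K \<le> card (\<Union>(S1 ` K))"
        proof (cases "K = {}")
          case True then show ?thesis by simp
        next
          case False
          have fK: "finite K" using K less.prems(1) finite_subset by blast
          have fU: "finite (\<Union>(S ` K))" using fK K less.prems(2) by auto
          have "K \<subset> I" using K i0 by blast
          then have "card K < card (\<Union>(S ` K))" using strict False by blast
          moreover have "\<Union>(S1 ` K) = \<Union>(S ` K) - {x}" unfolding S1_def by auto
          moreover have "card (\<Union>(S ` K) - {x}) \<ge> card (\<Union>(S ` K)) - 1"
            using fU by (simp add: card_Diff_singleton_if)
          ultimately show ?thesis by simp
        qed
      qed
      moreover have "\<forall>i\<in>I - {i0}. finite (S1 i)" using less.prems(2) unfolding S1_def by auto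
      ultimately obtain f' where f': "inj_on f' (I - {i0})" "\<forall>i\<in>I - {i0}. f' i \<in> S1 i"
        using less.hyps[of "I - {i0}" S1] less.prems(1) by blast
      define f where "f = f'(i0 := x)"
      have "inj_on f I"
      proof (rule inj_onI)
        fix i j assume ij: "i \<in> I" "j \<in> I" "f i = f j"
        show "i = j"
          using ij f' unfolding f_def S1_def
          by (cases "i = i0"; cases "j = i0") (auto dest: inj_onD)
      qed
      moreover have "\<forall>i\<in>I. f i \<in> S i" using f'(2) x unfolding f_def S1_def by auto
      ultimately show ?thesis by blast
    qed
  qed
qed



lemma konig:
  fixes V1 V2 :: "'a set" and F :: "'a set set"
  assumes fin1: "finite V1" and fin2: "finite V2" and disj: "V1 \<inter> V2 = {}"
    and FE: "F \<subseteq> {{u, v} | u v. u \<in> V1 \<and> v \<in> V2}"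
  shows "\<exists>M W. M \<subseteq> F \<and> is_matching M \<and> (\<forall>e\<in>F. e \<inter> W \<noteq> {}) \<and> finite W \<and> card W \<le> card M"
proof -
  define Nb where "Nb = (\<lambda>a. {b\<in>V2. {a, b} \<in> F})"
  define NX where "NX = (\<lambda>X. \<Union>(Nb ` X))"
  define d where "d = (\<lambda>X. int (card X) - int (card (NX X)))"
  have NXsub: "NX X \<subseteq> V2" for X unfolding NX_def Nb_def by auto
  have finNX: "finite (NX X)" for X using NXsub fin2 finite_subset by blast
  have fD: "finite (d ` Pow V1)" using fin1 by simp
  have neD: "d ` Pow V1 \<noteq> {}" by blast
  obtain X0 where X0': "X0 \<in> Pow V1" "d X0 = Max (d ` Pow V1)" using Max_in[OF fD neD] by auto
  have X0: "X0 \<subseteq> V1" "\<And>X. X \<subseteq> V1 \<Longrightarrow> d X \<le> d X0"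
    using X0' Max_ge[OF fD] by auto
  have finX0: "finite X0" using X0(1) fin1 finite_subset by blast
  define W where "W = (V1 - X0) \<union> NX X0"
  have cover: "\<forall>e\<in>F. e \<inter> W \<noteq> {}"
  proof
    fix e assume "e \<in> F"
    then obtain u v where uv: "e = {u, v}" "u \<in> V1" "v \<in> V2" using FE by blast
    show "e \<inter> W \<noteq> {}"
    proof (cases "u \<in> X0")
      case True
      then have "v \<in> NX X0" unfolding NX_def Nb_def using uv \<open>e \<in> F\<close> by auto
      then show ?thesis unfolding W_def using uv by auto
    next
      case False then show ?thesis unfolding W_def using uv by auto
    qed
  qed
  define S1 where "S1 = (\<lambda>a. Nb a - NX X0)"
  have "\<exists>f. inj_on f (V1 - X0) \<and> (\<forall>i\<in>V1 - X0. f i \<in> S1 i)"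
  proof (rule hall)
    show "finite (V1 - X0)" using fin1 by simp
    show "\<forall>i\<in>V1 - X0. finite (S1 i)" unfolding S1_def Nb_def using fin2 by auto
    show "\<forall>J\<subseteq>V1 - X0. card J \<le> card (\<Union> (S1 ` J))"
    proof (intro allI impI)
      fix K assume K: "K \<subseteq> V1 - X0"
      have fK: "finite K" using K fin1 finite_subset by blast
      have eq: "\<Union>(S1 ` K) = NX (K \<union> X0) - NX X0" unfolding S1_def NX_def by auto
      have sub: "NX X0 \<subseteq> NX (K \<union> X0)" unfolding NX_def by auto
      have c1: "card (\<Union>(S1 ` K)) = card (NX (K \<union> X0)) - card (NX X0)"
        unfolding eq using card_Diff_subset[OF finNX sub] .
      have cs: "card (NX X0) \<le> card (NX (K \<union> X0))" using sub finNX card_mono by blast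
      have "K \<union> X0 \<subseteq> V1" using X0(1) K by blast
      then have "d (K \<union> X0) \<le> d X0" by (rule X0(2))
      moreover have "card (K \<union> X0) = card K + card X0" using K fK finX0 by (subst card_Un_disjoint) auto
      ultimately show "card K \<le> card (\<Union>(S1 ` K))" using c1 cs unfolding d_def by linarith
    qed
  qed
  then obtain f where f: "inj_on f (V1 - X0)" "\<And>a. a \<in> V1 - X0 \<Longrightarrow> f a \<in> S1 a" by blast
  define S2 where "S2 = (\<lambda>b. {a\<in>X0. {a, b} \<in> F})"
  have "\<exists>g. inj_on g (NX X0) \<and> (\<forall>i\<in>NX X0. g i \<in> S2 i)"
  proof (rule hall)
    show "finite (NX X0)" by (rule finNX)
    show "\<forall>i\<in>NX X0. finite (S2 i)" unfolding S2_def using finX0 by auto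
    show "\<forall>J\<subseteq>NX X0. card J \<le> card (\<Union> (S2 ` J))"
    proof (intro allI impI)
      fix T assume T: "T \<subseteq> NX X0"
      have fT: "finite T" using T finNX finite_subset by blast
      show "card T \<le> card (\<Union>(S2 ` T))"
      proof (rule ccontr)
        assume "\<not> ?thesis"
        then have lt: "card (\<Union>(S2 ` T)) < card T" by simp
        define X' where "X' = X0 - \<Union>(S2 ` T)"
        have subX0: "\<Union>(S2 ` T) \<subseteq> X0" unfolding S2_def by auto
        have cX': "card X' = card X0 - card (\<Union>(S2 ` T))"
          unfolding X'_def using card_Diff_subset[OF finite_subset[OF subX0 finX0] subX0] .
        have cle: "card (\<Union>(S2 ` T)) \<le> card X0" using subX0 finX0 card_mono by blast
        have NX': "NX X' \<subseteq> NX X0 - T"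
        proof
          fix b assume "b \<in> NX X'"
          then obtain a where a: "a \<in> X'" "b \<in> Nb a" unfolding NX_def by auto
          have "b \<in> NX X0" using a unfolding X'_def NX_def by auto
          moreover have "b \<notin> T"
          proof
            assume "b \<in> T"
            then have "a \<in> S2 b" using a unfolding S2_def X'_def Nb_def by auto
            then show False using a(1) \<open>b \<in> T\<close> unfolding X'_def by auto
          qed
          ultimately show "b \<in> NX X0 - T" by auto
        qed
        have h1: "card (NX X') \<le> card (NX X0 - T)" using NX' by (intro card_mono) (simp add: finNX)
        have h2: "card (NX X0 - T) = card (NX X0) - card T" using T fT by (simp add: card_Diff_subset)
        have h3: "card T \<le> card (NX X0)" using T finNX card_mono by blast
        have "int (card X') = int (card X0) - int (card (\<Union>(S2 ` T)))" using cX' cle by simp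
        moreover have "int (card (NX X')) \<le> int (card (NX X0)) - int (card T)" using h1 h2 h3 by simp
        ultimately have "d X' > d X0" unfolding d_def using lt by linarith
        moreover have "X' \<subseteq> V1" using X0(1) unfolding X'_def by auto
        ultimately show False using X0(2)[of X'] by linarith
      qed
    qed
  qed
  then obtain g where g: "inj_on g (NX X0)" "\<And>b. b \<in> NX X0 \<Longrightarrow> g b \<in> S2 b" by blast
  define M1 where "M1 = (\<lambda>a. {a, f a}) ` (V1 - X0)"
  define M2 where "M2 = (\<lambda>b. {g b, b}) ` (NX X0)"
  define M where "M = M1 \<union> M2"
  have fa: "f a \<in> V2" "f a \<notin> NX X0" "{a, f a} \<in> F" if "a \<in> V1 - X0" for a
    using f(2)[OF that] unfolding S1_def Nb_def by auto
  have gb: "g b \<in> X0" "{g b, b} \<in> F" if "b \<in> NX X0" for b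
    using g(2)[OF that] unfolding S2_def by auto
  have gV1: "g b \<in> V1" if "b \<in> NX X0" for b using gb(1)[OF that] X0(1) by auto
  have MF: "M \<subseteq> F" unfolding M_def M1_def M2_def using fa(3) gb(2) by blast
  have inj1: "inj_on (\<lambda>a. {a, f a}) (V1 - X0)"
  proof (rule inj_onI)
    fix a a' assume a: "a \<in> V1 - X0" "a' \<in> V1 - X0" "{a, f a} = {a', f a'}"
    have "f a \<in> V2" "f a' \<in> V2" using fa(1) a(1,2) by blast+
    then show "a = a'" using a disj by (auto simp: doubleton_eq_iff)
  qed
  have inj2: "inj_on (\<lambda>b. {g b, b}) (NX X0)"
  proof (rule inj_onI)
    fix b b' assume b: "b \<in> NX X0" "b' \<in> NX X0" "{g b, b} = {g b', b'}"
    have "g b \<in> V1" "g b' \<in> V1" "b \<in> V2" "b' \<in> V2" using gV1 NXsub b(1,2) by blast+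
    then show "b = b'" using b disj by (auto simp: doubleton_eq_iff)
  qed
  have dis12: "M1 \<inter> M2 = {}"
  proof -
    { fix a b assume a: "a \<in> V1 - X0" and b: "b \<in> NX X0" and eq: "{a, f a} = {g b, b}"
      have "f a \<notin> NX X0" "g b \<in> X0" "b \<in> NX X0" using fa(2) gb(1) a b by blast+
      moreover have "b \<in> V2" using NXsub b by blast
      moreover have "a \<in> {g b, b}" using eq by blast
      ultimately have "False" using a disj by blast }
    then show ?thesis unfolding M1_def M2_def by blast
  qed
  have dj: "\<And>x. x \<in> V1 \<Longrightarrow> x \<in> V2 \<Longrightarrow> False" using disj by blast
  have matching: "is_matching M"
    unfolding is_matching_def
  proof (intro ballI impI)
    fix e e' assume e: "e \<in> M" "e' \<in> M" "e \<noteq> e'"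
    show "e \<inter> e' = {}"
    proof (cases "e \<in> M1"; cases "e' \<in> M1")
      assume "e \<in> M1" "e' \<in> M1"
      then obtain a a' where aa: "a \<in> V1 - X0" "a' \<in> V1 - X0" "e = {a, f a}" "e' = {a', f a'}"
        unfolding M1_def by blast
      have "a \<noteq> a'" using aa e(3) by blast
      then have "f a \<noteq> f a'" using f(1) aa(1,2) inj_onD by metis
      moreover have "f a \<in> V2" "f a' \<in> V2" using fa(1) aa(1,2) by blast+
      moreover have "a \<in> V1" "a' \<in> V1" using aa by auto
      ultimately have "a \<noteq> f a'" "f a \<noteq> a'" using dj by metis+
      then show ?thesis using aa \<open>a \<noteq> a'\<close> \<open>f a \<noteq> f a'\<close> by simp
    next
      assume "e \<notin> M1" "e' \<notin> M1"
      then have "e \<in> M2" "e' \<in> M2" using e unfolding M_def by blast+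
      then obtain b b' where bb: "b \<in> NX X0" "b' \<in> NX X0" "e = {g b, b}" "e' = {g b', b'}"
        unfolding M2_def by blast
      have "b \<noteq> b'" using bb e(3) by blast
      then have "g b \<noteq> g b'" using g(1) bb(1,2) inj_onD by metis
      moreover have "g b \<in> V1" "g b' \<in> V1" using gV1 bb(1,2) by blast+
      moreover have "b \<in> V2" "b' \<in> V2" using NXsub bb(1,2) by blast+
      ultimately have "g b \<noteq> b'" "b \<noteq> g b'" using dj by metis+
      then show ?thesis using bb \<open>b \<noteq> b'\<close> \<open>g b \<noteq> g b'\<close> by simp
    next
      assume "e \<in> M1" "e' \<notin> M1"
      then have "e' \<in> M2" using e unfolding M_def by blast
      then obtain a b where ab: "a \<in> V1 - X0" "b \<in> NX X0" "e = {a, f a}" "e' = {g b, b}"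
        using \<open>e \<in> M1\<close> unfolding M1_def M2_def by blast
      have "f a \<in> V2" "f a \<notin> NX X0" using fa(1,2) ab(1) by blast+
      moreover have "g b \<in> X0" using gb(1) ab(2) by blast
      moreover have "b \<in> V2" using NXsub ab(2) by blast
      moreover have "a \<in> V1" "a \<notin> X0" "g b \<in> V1" using ab X0(1) \<open>g b \<in> X0\<close> by auto
      ultimately have "a \<noteq> g b" "a \<noteq> b" "f a \<noteq> g b" "f a \<noteq> b" using dj ab(2) by metis+
      then show ?thesis using ab by simp
    next
      assume "e \<notin> M1" "e' \<in> M1"
      then have "e \<in> M2" using e unfolding M_def by blast
      then obtain a b where ab: "a \<in> V1 - X0" "b \<in> NX X0" "e' = {a, f a}" "e = {g b, b}"
        using \<open>e' \<in> M1\<close> unfolding M1_def M2_def by blast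
      have "f a \<in> V2" "f a \<notin> NX X0" using fa(1,2) ab(1) by blast+
      moreover have "g b \<in> X0" using gb(1) ab(2) by blast
      moreover have "b \<in> V2" using NXsub ab(2) by blast
      moreover have "a \<in> V1" "a \<notin> X0" "g b \<in> V1" using ab X0(1) \<open>g b \<in> X0\<close> by auto
      ultimately have "a \<noteq> g b" "a \<noteq> b" "f a \<noteq> g b" "f a \<noteq> b" using dj ab(2) by metis+
      then show ?thesis using ab by simp
    qed
  qed
  have "card M = card (V1 - X0) + card (NX X0)"
  proof -
    have "card M1 = card (V1 - X0)" unfolding M1_def using card_image[OF inj1] .
    moreover have "card M2 = card (NX X0)" unfolding M2_def using card_image[OF inj2] .
    moreover have "finite M1" "finite M2" unfolding M1_def M2_def using fin1 finNX by auto
    ultimately show ?thesis unfolding M_def using dis12 card_Un_disjoint by metis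
  qed
  moreover have "card W = card (V1 - X0) + card (NX X0)"
    unfolding W_def using fin1 finNX NXsub disj by (subst card_Un_disjoint) auto
  moreover have "finite W" unfolding W_def using fin1 finNX by auto
  ultimately show ?thesis using MF matching cover by (intro exI[of _ M] exI[of _ W]) auto
qed



theorem lemma3p2:
  fixes V1 V2 :: "'a set" and E blue :: "'a set set" and m n :: nat
    and B S :: "'a set"
  assumes "0 < n" and "n < m"
    and "finite V1" and "finite V2" and "V1 \<inter> V2 = {}"
    and "card V1 = m + n - 1" and "card V2 = m + n - 1"
    and "E \<subseteq> {{u, v} | u v. u \<in> V1 \<and> v \<in> V2}"
    and "\<forall>v \<in> V1 \<union> V2. real (degree E v) > 3 / 4 * real (m + n - 1)"
    and "blue \<subseteq> E"
    and "\<not> has_connected_matching (V1 \<union> V2) blue n"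
    and "is_component (V1 \<union> V2) blue B"
    and "\<forall>C. is_component (V1 \<union> V2) blue C \<longrightarrow> card C \<le> card B"
    and "card (B \<inter> V1) \<ge> n" and "card (B \<inter> V2) \<ge> n"
    and "is_min_vertex_cover_comp blue B S"
  shows "\<exists>R. is_component (V1 \<union> V2) (E - blue) R \<and> B - S \<subseteq> R"
proof -
  note npos = assms(1) and nm = assms(2) and fin1 = assms(3) and fin2 = assms(4)
    and disj = assms(5) and c1 = assms(6) and c2 = assms(7) and Eform = assms(8)
    and degA = assms(9) and blueE = assms(10) and nomatch = assms(11) and Bcomp = assms(12)
    and Bmax = assms(13) and B1 = assms(14) and B2 = assms(15) and Smin = assms(16)
  define V where "V = V1 \<union> V2"
  define N where "N = m + n - 1"
  have finV: "finite V" unfolding V_def using fin1 fin2 by simp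
  have N2n: "2 * n \<le> N" unfolding N_def using nm by simp
  have dj: "\<And>x. x \<in> V1 \<Longrightarrow> x \<in> V2 \<Longrightarrow> False" using disj by blast
  define nb where "nb = (\<lambda>v. {u. {u, v} \<in> E})"
  have edge: "\<exists>a b. e = {a, b} \<and> a \<in> V1 \<and> b \<in> V2" if "e \<in> E" for e
    using that Eform by blast
  have nb1: "nb v \<subseteq> V2" if "v \<in> V1" for v
  proof
    fix u assume "u \<in> nb v"
    then have "{u, v} \<in> E" unfolding nb_def by simp
    then obtain a b where ab: "{u, v} = {a, b}" "a \<in> V1" "b \<in> V2" using edge by blast
    have "v \<noteq> b" using that ab dj by blast
    then have "v = a" "u = b" using ab(1) by (auto simp: doubleton_eq_iff)
    then show "u \<in> V2" using ab by simp
  qed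
  have nb2: "nb v \<subseteq> V1" if "v \<in> V2" for v
  proof
    fix u assume "u \<in> nb v"
    then have "{u, v} \<in> E" unfolding nb_def by simp
    then obtain a b where ab: "{u, v} = {a, b}" "a \<in> V1" "b \<in> V2" using edge by blast
    have "v \<noteq> a" using that ab dj by blast
    then have "v = b" "u = a" using ab(1) by (auto simp: doubleton_eq_iff)
    then show "u \<in> V1" using ab by simp
  qed
  have endV: "u \<in> V" "v \<in> V" if "{u, v} \<in> E" for u v
    using edge[OF that] unfolding V_def by (auto simp: doubleton_eq_iff)
  have deg: "4 * card (nb v) > 3 * N" if "v \<in> V" for v
  proof -
    have "real (card (nb v)) > 3 / 4 * real N"
      using degA that unfolding V_def N_def nb_def degree_def by blast
    then have "real (4 * card (nb v)) > real (3 * N)" by simp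
    then show ?thesis by linarith
  qed
  have finnb: "finite (nb v)" if "v \<in> V" for v
  proof (cases "v \<in> V1")
    case True then show ?thesis using nb1 fin2 finite_subset by metis
  next
    case False then have "v \<in> V2" using that unfolding V_def by blast
    then show ?thesis using nb2 fin1 finite_subset by metis
  qed
  obtain u0 where u0: "u0 \<in> V" "B = {v \<in> V. (walk_rel V blue)\<^sup>*\<^sup>* u0 v}"
    using Bcomp unfolding is_component_def V_def by blast
  have BV: "B \<subseteq> V" using u0 by blast
  have finB: "finite B" using BV finV finite_subset by blast
  have Bclos: "y \<in> B" if "x \<in> B" "{x, y} \<in> blue" for x y
  proof -
    have "y \<in> V" using endV that blueE by blast
    moreover have "x \<in> V" using that BV by blast
    ultimately have "walk_rel V blue x y" using that unfolding walk_rel_def by simp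
    moreover have "(walk_rel V blue)\<^sup>*\<^sup>* u0 x" using that u0 by blast
    ultimately have "(walk_rel V blue)\<^sup>*\<^sup>* u0 y" by (rule rtranclp.rtrancl_into_rtrancl[rotated])
    then show ?thesis using u0(2) \<open>y \<in> V\<close> by blast
  qed
  have SB: "S \<subseteq> B" and Scov: "\<And>e. e \<in> blue \<Longrightarrow> e \<subseteq> B \<Longrightarrow> e \<inter> S \<noteq> {}"
    using Smin unfolding is_min_vertex_cover_comp_def is_vertex_cover_comp_def by blast+
  have Smin': "card S \<le> card T" if "is_vertex_cover_comp blue B T" for T
    using Smin that unfolding is_min_vertex_cover_comp_def by blast
  have redK: "{x, y} \<in> E - blue" if "x \<in> B - S" "{x, y} \<in> E" "y \<notin> S" for x y
  proof (rule ccontr)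
    assume "{x, y} \<notin> E - blue"
    then have bl: "{x, y} \<in> blue" using that by blast
    then have "y \<in> B" using Bclos that by blast
    then have "{x, y} \<inter> S \<noteq> {}" using Scov[OF bl] that by blast
    then show False using that by blast
  qed
  have Sn: "card S < n"
  proof (rule ccontr)
    assume "\<not> card S < n"
    then have nS: "n \<le> card S" by simp
    define F where "F = {e \<in> blue. e \<subseteq> B}"
    have "F \<subseteq> E" unfolding F_def using blueE by blast
    then have "F \<subseteq> {{u, v} | u v. u \<in> V1 \<and> v \<in> V2}" using Eform by (rule subset_trans)
    from konig[OF fin1 fin2 disj this] obtain M W where
      MW: "M \<subseteq> F" "is_matching M" "\<forall>e\<in>F. e \<inter> W \<noteq> {}" "finite W" "card W \<le> card M"
      by blast
    have "\<forall>e\<in>blue. e \<subseteq> B \<longrightarrow> e \<inter> (W \<inter> B) \<noteq> {}"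
    proof (intro ballI impI)
      fix e assume "e \<in> blue" "e \<subseteq> B"
      then have "e \<in> F" unfolding F_def by blast
      then have "e \<inter> W \<noteq> {}" using MW(3) by blast
      then show "e \<inter> (W \<inter> B) \<noteq> {}" using \<open>e \<subseteq> B\<close> by blast
    qed
    then have "is_vertex_cover_comp blue B (W \<inter> B)"
      unfolding is_vertex_cover_comp_def by blast
    then have "card S \<le> card (W \<inter> B)" by (rule Smin')
    also have "\<dots> \<le> card W" using MW(4) by (simp add: card_mono)
    finally have "n \<le> card M" using MW(5) nS by linarith
    then obtain M' where M': "M' \<subseteq> M" "card M' = n"
      by (meson obtain_subset_with_card_n)
    have "M' \<subseteq> blue" using M' MW(1) unfolding F_def by blast
    moreover have "is_matching M'" using MW(2) M'(1) unfolding is_matching_def by blast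
    moreover have "\<Union>M' \<subseteq> B" using M' MW(1) unfolding F_def by blast
    ultimately have "has_connected_matching (V1 \<union> V2) blue n"
      unfolding has_connected_matching_def using Bcomp M'(2) by (intro exI[of _ M'] exI[of _ B]) simp
    then show False using nomatch by blast
  qed
  define rw where "rw = walk_rel V (E - blue)"
  define rc where "rc = rw\<^sup>*\<^sup>*"
  have rw_sym: "rw x y \<Longrightarrow> rw y x" for x y unfolding rw_def walk_rel_def by (simp add: insert_commute)
  have rc_sym: "rc y x" if "rc x y" for x y
    using that unfolding rc_def
  proof (induction rule: rtranclp_induct)
    case base then show ?case by simp
  next
    case (step y z) then show ?case using rw_sym by (meson converse_rtranclp_into_rtranclp)
  qed
  have rc_trans: "rc x z" if "rc x y" "rc y z" for x y z
    using that unfolding rc_def by (rule rtranclp_trans)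
  have rc_edge: "rc x y" if "{x, y} \<in> E - blue" for x y
  proof -
    have "x \<in> V" "y \<in> V" using endV that by blast+
    then have "rw x y" using that unfolding rw_def walk_rel_def by simp
    then show ?thesis unfolding rc_def by simp
  qed
  have rc_K: "rc x y" if "x \<in> B - S" "y \<in> nb x" "y \<notin> S" for x y
  proof -
    have "{x, y} \<in> E" using that unfolding nb_def by (simp add: insert_commute)
    then show ?thesis using redK that rc_edge by blast
  qed
  have same: "rc x x'" if "x \<in> B - S" "x' \<in> B - S" "nb x \<subseteq> Q" "nb x' \<subseteq> Q" "card Q = N" "finite Q"
    for x x' Q
  proof -
    have xV: "x \<in> V" "x' \<in> V" using that BV by blast+
    have "card (nb x \<union> nb x') \<le> N" using that card_mono by (metis Un_least)
    moreover have "card (nb x \<union> nb x') + card (nb x \<inter> nb x') = card (nb x) + card (nb x')"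
      using card_Un_Int finnb xV by metis
    ultimately have "4 * card (nb x \<inter> nb x') > 2 * N" using deg[OF xV(1)] deg[OF xV(2)] by linarith
    then have "card (nb x \<inter> nb x') > card S" using Sn N2n by linarith
    then have "\<not> nb x \<inter> nb x' \<subseteq> S"
      using card_mono[OF finite_subset[OF SB finB]] by (meson not_le)
    then obtain y where y: "y \<in> nb x" "y \<in> nb x'" "y \<notin> S" by blast
    have "rc x y" using rc_K that y by blast
    moreover have "rc y x'" using rc_K that y rc_sym by blast
    ultimately show ?thesis using rc_trans by blast
  qed
  have V1N: "card V1 = N" "card V2 = N" using c1 c2 unfolding N_def by auto
  have V12: "V1 \<subseteq> V" "V2 \<subseteq> V" unfolding V_def by auto
  have finS: "finite S" using SB finB finite_subset by blast
  have cardS: "card S = card (S \<inter> V1) + card (S \<inter> V2)"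
  proof -
    have "S = (S \<inter> V1) \<union> (S \<inter> V2)" using SB BV unfolding V_def by blast
    moreover have "(S \<inter> V1) \<inter> (S \<inter> V2) = {}" using disj by blast
    ultimately show ?thesis using finS by (metis card_Un_disjoint finite_Int)
  qed
  have cardB: "card B = card (B \<inter> V1) + card (B \<inter> V2)"
  proof -
    have "B = (B \<inter> V1) \<union> (B \<inter> V2)" using BV unfolding V_def by blast
    moreover have "(B \<inter> V1) \<inter> (B \<inter> V2) = {}" using disj by blast
    ultimately show ?thesis using finB by (metis card_Un_disjoint finite_Int)
  qed
  have cardBi: "card (B \<inter> Vi) = card ((B - S) \<inter> Vi) + card (S \<inter> Vi)" if "finite Vi" for Vi
  proof -
    have "B \<inter> Vi = ((B - S) \<inter> Vi) \<union> (S \<inter> Vi)" using SB by blast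
    moreover have "((B - S) \<inter> Vi) \<inter> (S \<inter> Vi) = {}" by blast
    ultimately show ?thesis using that by (metis card_Un_disjoint finite_Int)
  qed
  have cross: "rc x w" if xX: "x \<in> (B - S) \<inter> V1" and wX: "w \<in> (B - S) \<inter> V2" for x w
  proof (rule ccontr)
    assume nrc: "\<not> rc x w"
    have xV: "x \<in> V" and wV: "w \<in> V" using xX wX V12 by blast+
    have nbx: "nb x \<subseteq> V2" using nb1 xX by blast
    have nbw: "nb w \<subseteq> V1" using nb2 wX by blast
    define X1 where "X1 = (B - S) \<inter> V1"
    define X2 where "X2 = (B - S) \<inter> V2"
    have "X1 \<subseteq> V1 - nb w"
    proof
      fix x' assume x': "x' \<in> X1"
      have "x' \<notin> nb w"
      proof
        assume "x' \<in> nb w"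
        then have "{w, x'} \<in> E" unfolding nb_def by (simp add: insert_commute)
        moreover have "x' \<notin> S" using x' unfolding X1_def by blast
        ultimately have "rc w x'" using redK wX rc_edge by blast
        moreover have "rc x x'" using same[of x x' V2] xX x' nbx nb1 fin2 V1N unfolding X1_def by blast
        ultimately show False using nrc rc_sym rc_trans by blast
      qed
      then show "x' \<in> V1 - nb w" using x' unfolding X1_def by blast
    qed
    then have "card X1 \<le> card (V1 - nb w)" using fin1 by (simp add: card_mono)
    moreover have "card (V1 - nb w) = N - card (nb w)" using nbw fin1 V1N by (simp add: card_Diff_subset finnb wV)
    moreover have "card (nb w) \<le> N" using nbw fin1 V1N card_mono by metis
    ultimately have X1s: "4 * card X1 < N" using deg[OF wV] by linarith
    have "X2 \<subseteq> V2 - nb x"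
    proof
      fix w' assume w': "w' \<in> X2"
      have "w' \<notin> nb x"
      proof
        assume "w' \<in> nb x"
        then have "{x, w'} \<in> E" unfolding nb_def by (simp add: insert_commute)
        moreover have "w' \<notin> S" using w' unfolding X2_def by blast
        ultimately have "rc x w'" using redK xX rc_edge by blast
        moreover have "rc w' w" using same[of w' w V1] wX w' nbw nb2 fin1 V1N unfolding X2_def by blast
        ultimately show False using nrc rc_trans by blast
      qed
      then show "w' \<in> V2 - nb x" using w' unfolding X2_def by blast
    qed
    then have "card X2 \<le> card (V2 - nb x)" using fin2 by (simp add: card_mono)
    moreover have "card (V2 - nb x) = N - card (nb x)" using nbx fin2 V1N by (simp add: card_Diff_subset finnb xV)
    moreover have "card (nb x) \<le> N" using nbx fin2 V1N card_mono by metis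
    ultimately have X2s: "4 * card X2 < N" using deg[OF xV] by linarith
    have hB1: "card X1 + card (S \<inter> V1) \<ge> n" using cardBi[OF fin1] B1 unfolding X1_def by linarith
    have hB2: "card X2 + card (S \<inter> V2) \<ge> n" using cardBi[OF fin2] B2 unfolding X2_def by linarith
    define U1 where "U1 = nb w - S"
    define U2 where "U2 = nb x - S"
    have U1sub: "U1 \<subseteq> V1" and U2sub: "U2 \<subseteq> V2" using nbw nbx unfolding U1_def U2_def by blast+
    have finU: "finite U1" "finite U2" using U1sub U2sub fin1 fin2 finite_subset by blast+
    have "nb w \<subseteq> (nb w - S) \<union> (S \<inter> V1)" using nbw by blast
    then have "card (nb w) \<le> card ((nb w - S) \<union> (S \<inter> V1))"
      using finnb[OF wV] finS by (intro card_mono) auto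
    also have "\<dots> \<le> card (nb w - S) + card (S \<inter> V1)" by (rule card_Un_le)
    finally have "card U1 + card (S \<inter> V1) \<ge> card (nb w)" unfolding U1_def .
    then have U1b': "4 * card U1 + 4 * card (S \<inter> V1) > 3 * N"
      using deg[OF wV] by linarith
    have s1b: "4 * card (S \<inter> V1) < N" using hB2 X2s Sn cardS by linarith
    have U1big: "2 * card U1 > N" using U1b' s1b by linarith
    have "nb x \<subseteq> (nb x - S) \<union> (S \<inter> V2)" using nbx by blast
    then have "card (nb x) \<le> card ((nb x - S) \<union> (S \<inter> V2))"
      using finnb[OF xV] finS by (intro card_mono) auto
    also have "\<dots> \<le> card (nb x - S) + card (S \<inter> V2)" by (rule card_Un_le)
    finally have "card U2 + card (S \<inter> V2) \<ge> card (nb x)" unfolding U2_def .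
    then have U2b': "4 * card U2 + 4 * card (S \<inter> V2) > 3 * N"
      using deg[OF xV] by linarith
    have s2b: "4 * card (S \<inter> V2) < N" using hB1 X1s Sn cardS by linarith
    have U2big: "2 * card U2 > N" using U2b' s2b by linarith
    have allblue: "{y, z} \<in> blue" if y: "y \<in> U2" and z: "z \<in> U1" and yz: "{y, z} \<in> E" for y z
    proof (rule ccontr)
      assume "{y, z} \<notin> blue"
      then have "rc y z" using yz rc_edge by blast
      moreover have "rc x y" using rc_K xX y unfolding U2_def by blast
      moreover have "rc w z" using rc_K wX z unfolding U1_def by blast
      ultimately show False using nrc rc_trans rc_sym by blast
    qed
    have common: "card (nb v \<inter> U) + N \<ge> card (nb v) + card U" if "nb v \<subseteq> Q" "U \<subseteq> Q" "card Q = N" "finite Q" for v U Q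
    proof -
      have fU: "finite U" "finite (nb v)" using that finite_subset by blast+
      have "card (nb v \<union> U) \<le> N" using that card_mono by (metis Un_least)
      moreover have "card (nb v \<union> U) + card (nb v \<inter> U) = card (nb v) + card U"
        using card_Un_Int fU by metis
      ultimately show ?thesis by linarith
    qed
    have "U2 \<noteq> {}" using U2big by auto
    then obtain u0' where u0': "u0' \<in> U2" by blast
    define C where "C = {v \<in> V. (walk_rel V blue)\<^sup>*\<^sup>* u0' v}"
    have u0'V: "u0' \<in> V" using u0' U2sub V12 by blast
    have Ccomp: "is_component (V1 \<union> V2) blue C" unfolding is_component_def C_def V_def
      using u0'V unfolding V_def by blast
    have Cclos: "y \<in> C" if "x' \<in> C" "{x', y} \<in> blue" for x' y
    proof -
      have "y \<in> V" using endV that blueE by blast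
      moreover have "x' \<in> V" using that unfolding C_def by blast
      ultimately have "walk_rel V blue x' y" using that unfolding walk_rel_def by simp
      moreover have "(walk_rel V blue)\<^sup>*\<^sup>* u0' x'" using that unfolding C_def by blast
      ultimately have "(walk_rel V blue)\<^sup>*\<^sup>* u0' y" by (rule rtranclp.rtrancl_into_rtrancl[rotated])
      then show ?thesis unfolding C_def using \<open>y \<in> V\<close> by blast
    qed
    have u0C: "u0' \<in> C" unfolding C_def using u0'V by simp
    have U2C: "U2 \<subseteq> C"
    proof
      fix u assume u: "u \<in> U2"
      have uV: "u \<in> V" using u U2sub V12 by blast
      have uV2: "u \<in> V2" "u0' \<in> V2" using u u0' U2sub by blast+
      have a1: "card (nb u \<inter> U1) + N \<ge> card (nb u) + card U1"
        by (rule common[OF nb2[OF uV2(1)] U1sub V1N(1) fin1])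
      have a2: "card (nb u0' \<inter> U1) + N \<ge> card (nb u0') + card U1"
        by (rule common[OF nb2[OF uV2(2)] U1sub V1N(1) fin1])
      have "(nb u \<inter> U1) \<inter> (nb u0' \<inter> U1) \<noteq> {}"
      proof
        assume em: "(nb u \<inter> U1) \<inter> (nb u0' \<inter> U1) = {}"
        have "card ((nb u \<inter> U1) \<union> (nb u0' \<inter> U1)) = card (nb u \<inter> U1) + card (nb u0' \<inter> U1)"
          using em finU by (simp add: card_Un_disjoint)
        moreover have "card ((nb u \<inter> U1) \<union> (nb u0' \<inter> U1)) \<le> card U1"
          using finU by (intro card_mono) auto
        ultimately show False using a1 a2 deg[OF uV] deg[OF u0'V] U1big by linarith
      qed
      then obtain z where z: "z \<in> U1" "z \<in> nb u" "z \<in> nb u0'" by blast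
      have "{u0', z} \<in> E" using z(3) unfolding nb_def by (simp add: insert_commute)
      then have "{u0', z} \<in> blue" by (rule allblue[OF u0' z(1)])
      then have "z \<in> C" using Cclos u0C by blast
      have "{u, z} \<in> E" using z(2) unfolding nb_def by (simp add: insert_commute)
      then have "{u, z} \<in> blue" by (rule allblue[OF u z(1)])
      then have "{z, u} \<in> blue" by (simp add: insert_commute)
      then show "u \<in> C" using Cclos \<open>z \<in> C\<close> by blast
    qed
    have U1C: "U1 \<subseteq> C"
    proof
      fix z assume z: "z \<in> U1"
      have zV: "z \<in> V" using z U1sub V12 by blast
      have zV1: "z \<in> V1" using z U1sub by blast
      have "card (nb z \<inter> U2) + N \<ge> card (nb z) + card U2"
        by (rule common[OF nb1[OF zV1] U2sub V1N(2) fin2])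
      moreover have "4 * card (nb z) > 3 * N" using deg[OF zV] .
      ultimately have "nb z \<inter> U2 \<noteq> {}" using U2big by (cases "nb z \<inter> U2 = {}") auto
      then obtain u where u: "u \<in> nb z" "u \<in> U2" by blast
      have "{u, z} \<in> E" using u(1) unfolding nb_def by simp
      then have "{u, z} \<in> blue" by (rule allblue[OF u(2) z])
      moreover have "u \<in> C" using u U2C by blast
      ultimately show "z \<in> C" using Cclos by blast
    qed
    have finC: "finite C" unfolding C_def using finV by simp
    have "card (U1 \<union> U2) = card U1 + card U2" using finU U1sub U2sub disj
      by (subst card_Un_disjoint) auto
    moreover have "card (U1 \<union> U2) \<le> card C" using U1C U2C finC by (intro card_mono) auto
    moreover have "card C \<le> card B" using Bmax Ccomp by blast
    ultimately show False using cardB cardBi[OF fin1] cardBi[OF fin2] U1b' U2b' X1s X2s Sn cardS N2n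
      unfolding X1_def X2_def by linarith
  qed
  show ?thesis
  proof (cases "B - S = {}")
    case True
    have "V1 \<noteq> {}" using V1N N2n npos by auto
    then obtain v where v: "v \<in> V1" by blast
    then show ?thesis using True unfolding is_component_def by (intro exI[of _ "{u \<in> V1 \<union> V2. (walk_rel (V1 \<union> V2) (E - blue))\<^sup>*\<^sup>* v u}"]) blast
  next
    case False
    then obtain x0 where x0: "x0 \<in> B - S" by blast
    have x0V: "x0 \<in> V" using x0 BV by blast
    have "rc x0 v" if v: "v \<in> B - S" for v
    proof -
      have vV: "v \<in> V" using v BV by blast
      show ?thesis
      proof (cases "x0 \<in> V1"; cases "v \<in> V1")
        assume "x0 \<in> V1" "v \<in> V1"
        then show ?thesis using same[of x0 v V2] x0 v nb1 fin2 V1N by blast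
      next
        assume a: "x0 \<notin> V1" "v \<notin> V1"
        then have "x0 \<in> V2" "v \<in> V2" using x0V vV unfolding V_def by blast+
        then show ?thesis using same[of x0 v V1] x0 v nb2 fin1 V1N by blast
      next
        assume a: "x0 \<in> V1" "v \<notin> V1"
        then have "v \<in> V2" using vV unfolding V_def by blast
        then show ?thesis using cross[of x0 v] a x0 v by blast
      next
        assume a: "x0 \<notin> V1" "v \<in> V1"
        then have "x0 \<in> V2" using x0V unfolding V_def by blast
        then have "rc v x0" using cross[of v x0] a x0 v by blast
        then show ?thesis using rc_sym by blast
      qed
    qed
    then have "B - S \<subseteq> {u \<in> V. rc x0 u}" using BV by blast
    moreover have "is_component (V1 \<union> V2) (E - blue) {u \<in> V. rc x0 u}"
      unfolding is_component_def rc_def rw_def V_def using x0V unfolding V_def by blast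
    ultimately show ?thesis by blast
  qed
qed

end
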